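(* Let $\tau$ be a substitution satisfying the standing assumptions below such that $(X_\tau,\sigma)$ is quasi-invertible, and let $U\subset X_\tau$ be a clopen set containing the branch point. Let $h:U\to\{1,\ldots,H\}$ be the height function, $h(x)=\min\{k\ge1:\sigma^k(x)\in U\}$, and for $1\le k\le H$ and $0\le j\le k-1$ let $U_k^j=\sigma^j(h^{-1}(\{k\}))$. Then the sets $\{U_k^j:1\le k\le H,\ 0\le j\le k-1\}$ form a partition of $X_\tau$ into clopen sets.
   Context: Substitutions are extended to words and sequences by concatenation; $u$ is a fixed point of $\tau$, $\sigma$ the left shift, $X_\tau$ the closure of $\{\sigma^n(u):n\ge0\}$ in $\mathcal A^{\mathbb N}$. A branch point is a point of $X_\tau$ with more than one $\sigma$-preimage in $X_\tau$; quasi-invertible means $X_\tau$ has exactly one branch point. Standing assumptions: $\tau$ primitive (so $(X_\tau,\sigma)$ is minimal and $h$ is finite-valued and bounded), $X_\tau$ infinite, $\tau$ unilaterally recognizable, all powers of $\tau$ injective on letters. *)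

theory Defs
  imports "HOL-Analysis.Analysis"
begin

definition subst_word :: "('a \<Rightarrow> 'a list) \<Rightarrow> 'a list \<Rightarrow> 'a list" where
  "subst_word \<tau> w = concat (map \<tau> w)"

definition subst_pow :: "('a \<Rightarrow> 'a list) \<Rightarrow> nat \<Rightarrow> 'a \<Rightarrow> 'a list" where
  "subst_pow \<tau> n a = (subst_word \<tau> ^^ n) [a]"

text \<open>Extension of a non-erasing substitution to one-sided infinite sequences by concatenation:
  position i of tau(x) is read off from tau(x_0 ... x_i), which has length > i.\<close>
definition subst_seq :: "('a \<Rightarrow> 'a list) \<Rightarrow> (nat \<Rightarrow> 'a) \<Rightarrow> (nat \<Rightarrow> 'a)" where
  "subst_seq \<tau> x = (\<lambda>i. subst_word \<tau> (map x [0..<Suc i]) ! i)"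

definition nonerasing :: "('a \<Rightarrow> 'a list) \<Rightarrow> bool" where
  "nonerasing \<tau> \<longleftrightarrow> (\<forall>a. \<tau> a \<noteq> [])"

definition primitive :: "('a \<Rightarrow> 'a list) \<Rightarrow> bool" where
  "primitive \<tau> \<longleftrightarrow> (\<exists>n\<ge>1. \<forall>a b. b \<in> set (subst_pow \<tau> n a))"

definition shift :: "(nat \<Rightarrow> 'a) \<Rightarrow> (nat \<Rightarrow> 'a)" where
  "shift x = (\<lambda>i. x (Suc i))"

definition seq_topology :: "(nat \<Rightarrow> 'a) topology" where
  "seq_topology = product_topology (\<lambda>_. discrete_topology UNIV) UNIV"

definition subshift :: "(nat \<Rightarrow> 'a) \<Rightarrow> (nat \<Rightarrow> 'a) set" where
  "subshift u = seq_topology closure_of (range (\<lambda>n. (shift ^^ n) u))"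

definition branch_point :: "(nat \<Rightarrow> 'a) set \<Rightarrow> (nat \<Rightarrow> 'a) \<Rightarrow> bool" where
  "branch_point X y \<longleftrightarrow> y \<in> X \<and> (\<exists>x1\<in>X. \<exists>x2\<in>X. x1 \<noteq> x2 \<and> shift x1 = y \<and> shift x2 = y)"

definition quasi_invertible :: "(nat \<Rightarrow> 'a) set \<Rightarrow> bool" where
  "quasi_invertible X \<longleftrightarrow> (\<exists>!y. branch_point X y)"

definition unilaterally_recognizable :: "('a \<Rightarrow> 'a list) \<Rightarrow> (nat \<Rightarrow> 'a) set \<Rightarrow> bool" where
  "unilaterally_recognizable \<tau> X \<longleftrightarrow>
     (\<forall>x\<in>X. \<exists>!(k, y). y \<in> X \<and> k < length (\<tau> (y 0)) \<and> x = (shift ^^ k) (subst_seq \<tau> y))"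

definition clopen_in :: "(nat \<Rightarrow> 'a) set \<Rightarrow> (nat \<Rightarrow> 'a) set \<Rightarrow> bool" where
  "clopen_in X U \<longleftrightarrow> openin (subtopology seq_topology X) U \<and> closedin (subtopology seq_topology X) U"

definition height :: "(nat \<Rightarrow> 'a) set \<Rightarrow> (nat \<Rightarrow> 'a) \<Rightarrow> nat" where
  "height U x = (LEAST k. 1 \<le> k \<and> (shift ^^ k) x \<in> U)"

definition tower_level :: "(nat \<Rightarrow> 'a) set \<Rightarrow> nat \<Rightarrow> nat \<Rightarrow> (nat \<Rightarrow> 'a) set" where
  "tower_level U k j = (shift ^^ j) ` {x \<in> U. height U x = k}"

end

theory Submission
  imports Defs
begin


definition cyl :: "(nat \<Rightarrow> 'a) \<Rightarrow> nat \<Rightarrow> (nat \<Rightarrow> 'a) set" where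
  "cyl x n = {y. \<forall>i<n. y i = x i}"

lemma topspace_seq[simp]: "topspace seq_topology = UNIV"
  by (simp add: seq_topology_def)

lemma cyl_open: "openin seq_topology (cyl x n)"
proof -
  have e: "cyl x n = PiE UNIV (\<lambda>i. if i < n then {x i} else UNIV)"
    by (auto simp: cyl_def PiE_def Pi_def extensional_def)
  have "{i \<in> UNIV. (if i < n then {x i} else UNIV) \<noteq> topspace (discrete_topology UNIV)} \<subseteq> {..<n}"
  proof
    fix i assume "i \<in> {i \<in> UNIV. (if i < n then {x i} else UNIV) \<noteq> topspace (discrete_topology UNIV)}"
    then show "i \<in> {..<n}" by (cases "i < n") simp_all
  qed
  then have f: "finite {i \<in> UNIV. (if i < n then {x i} else UNIV) \<noteq> topspace (discrete_topology UNIV)}"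
    using finite_subset by blast
  have o: "\<forall>i\<in>UNIV. openin (discrete_topology UNIV) (if i < n then {x i} else UNIV)"
    by simp
  show ?thesis unfolding seq_topology_def e
    using openin_PiE_gen[THEN iffD2, OF disjI2, OF conjI, OF f o] .
qed

lemma open_cyl: assumes "openin seq_topology V" "x \<in> V" shows "\<exists>n. cyl x n \<subseteq> V"
proof -
  have "\<exists>W. finite {i \<in> UNIV. W i \<noteq> topspace (discrete_topology UNIV)} \<and> (\<forall>i\<in>UNIV. openin (discrete_topology UNIV) (W i)) \<and> x \<in> Pi\<^sub>E UNIV W \<and> Pi\<^sub>E UNIV W \<subseteq> V"
    using assms unfolding seq_topology_def openin_product_topology_alt by blast
  then obtain W where W0: "finite {i \<in> UNIV. W i \<noteq> topspace (discrete_topology UNIV)}" and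
     W: "x \<in> Pi\<^sub>E UNIV W" "Pi\<^sub>E UNIV W \<subseteq> V"
    by blast
  have W1: "finite {i. W i \<noteq> UNIV}" using W0 by simp
  obtain n where n: "{i. W i \<noteq> UNIV} \<subseteq> {..<n}"
    using W1 finite_nat_bounded by blast
  have "cyl x n \<subseteq> Pi\<^sub>E UNIV W"
  proof
    fix y assume y: "y \<in> cyl x n"
    have "y i \<in> W i" for i
    proof (cases "W i = UNIV")
      case False
      then have "i < n" using n by blast
      then have "y i = x i" using y by (simp add: cyl_def)
      then show ?thesis using W(1) by (simp add: PiE_iff)
    qed simp
    then show "y \<in> Pi\<^sub>E UNIV W" by (simp add: PiE_iff)
  qed
  then show ?thesis using W(2) by blast
qed

lemma shift_pow_apply: "(shift ^^ k) x i = x (k + i)"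
  by (induction k arbitrary: x i) (auto simp: shift_def)

lemma shift_pow_apply': "(shift ^^ k) x = (\<lambda>i. x (k + i))"
  by (rule ext) (simp add: shift_pow_apply)

lemma cont_shift_pow: "continuous_map seq_topology seq_topology (shift ^^ k)"
  unfolding seq_topology_def continuous_map_componentwise_UNIV shift_pow_apply
proof
  fix i show "continuous_map (product_topology (\<lambda>_. discrete_topology UNIV) UNIV) (discrete_topology UNIV) (\<lambda>x::nat\<Rightarrow>'a. x (k + i))"
    by (rule continuous_map_product_projection) simp
qed

lemma compact_seq: "compact_space (seq_topology :: (nat \<Rightarrow> 'a::finite) topology)"
  unfolding seq_topology_def by (simp add: compact_space_product_topology compact_space_discrete_topology)

lemma hausdorff_seq: "Hausdorff_space seq_topology"
  unfolding seq_topology_def by (simp add: Hausdorff_space_product_topology)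




lemma sw_append: "subst_word \<tau> (xs @ ys) = subst_word \<tau> xs @ subst_word \<tau> ys"
  by (simp add: subst_word_def)

lemma sw_pow_append: "(subst_word \<tau> ^^ m) (xs @ ys) = (subst_word \<tau> ^^ m) xs @ (subst_word \<tau> ^^ m) ys"
  by (induction m) (auto simp: sw_append)

lemma sw_pow_Cons: "(subst_word \<tau> ^^ m) (a # ys) = (subst_word \<tau> ^^ m) [a] @ (subst_word \<tau> ^^ m) ys"
  by (metis append_Cons append_Nil sw_pow_append)

lemma sw_pow_Nil[simp]: "(subst_word \<tau> ^^ m) [] = []"
  by (induction m) (auto simp: subst_word_def)

lemma sw_len: "nonerasing \<tau> \<Longrightarrow> length xs \<le> length (subst_word \<tau> xs)"
proof (induction xs)
  case (Cons a xs)
  have "\<tau> a \<noteq> []" using Cons.prems by (simp add: nonerasing_def)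
  then have "1 \<le> length (\<tau> a)" by (cases "\<tau> a") auto
  then show ?case using Cons by (simp add: subst_word_def)
qed (simp add: subst_word_def)

lemma sw_pow_len: "nonerasing \<tau> \<Longrightarrow> length xs \<le> length ((subst_word \<tau> ^^ m) xs)"
  by (induction m) (auto intro: order_trans[OF _ sw_len])

lemma fix_prefix:
  assumes ne: "nonerasing \<tau>" and fp: "subst_seq \<tau> u = u"
  shows "map u [0..<length (subst_word \<tau> (map u [0..<k]))] = subst_word \<tau> (map u [0..<k])"
proof (rule nth_equalityI)
  fix i assume "i < length (map u [0..<length (subst_word \<tau> (map u [0..<k]))])"
  then have i: "i < length (subst_word \<tau> (map u [0..<k]))" by simp
  have ui0: "subst_word \<tau> (map u [0..<Suc i]) ! i = u i"
    using fun_cong[OF fp, of i] by (simp only: subst_seq_def)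
  note ui = ui0[symmetric]
  have li: "Suc i \<le> length (subst_word \<tau> (map u [0..<Suc i]))"
    using sw_len[OF ne, of "map u [0..<Suc i]"] by simp
  have yx: "subst_word \<tau> (map u [0..<Suc i]) ! i = subst_word \<tau> (map u [0..<k]) ! i"
  proof (cases "Suc i \<le> k")
    case True
    obtain d where d: "k = Suc i + d" using True le_Suc_ex by blast
    have eq: "[0..<k] = [0..<Suc i] @ [Suc i..<k]" unfolding d by (rule upt_add_eq_append) simp
    have "subst_word \<tau> (map u [0..<k]) = subst_word \<tau> (map u [0..<Suc i]) @ subst_word \<tau> (map u [Suc i..<k])"
      by (simp only: eq map_append sw_append)
    then show ?thesis using li by (simp add: nth_append)
  next
    case False
    then have "k \<le> Suc i" by simp
    then obtain d where d: "Suc i = k + d" using le_Suc_ex by blast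
    have eq: "[0..<Suc i] = [0..<k] @ [k..<Suc i]" unfolding d by (rule upt_add_eq_append) simp
    have "subst_word \<tau> (map u [0..<Suc i]) = subst_word \<tau> (map u [0..<k]) @ subst_word \<tau> (map u [k..<Suc i])"
      by (simp only: eq map_append sw_append)
    then show ?thesis using i by (simp add: nth_append)
  qed
  have "map u [0..<length (subst_word \<tau> (map u [0..<k]))] ! i = u i" using i by simp
  also have "\<dots> = subst_word \<tau> (map u [0..<Suc i]) ! i" by (rule ui)
  also have "\<dots> = subst_word \<tau> (map u [0..<k]) ! i" by (rule yx)
  finally show "map u [0..<length (subst_word \<tau> (map u [0..<k]))] ! i = subst_word \<tau> (map u [0..<k]) ! i" .
qed simp

lemma fix_prefix_pow:
  assumes ne: "nonerasing \<tau>" and fp: "subst_seq \<tau> u = u"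
  shows "map u [0..<length ((subst_word \<tau> ^^ m) (map u [0..<k]))] = (subst_word \<tau> ^^ m) (map u [0..<k])"
proof (induction m)
  case (Suc m)
  let ?L = "length ((subst_word \<tau> ^^ m) (map u [0..<k]))"
  have "(subst_word \<tau> ^^ Suc m) (map u [0..<k]) = subst_word \<tau> (map u [0..<?L])"
    using Suc by simp
  then show ?case using fix_prefix[OF ne fp, of ?L] by simp
qed simp

lemma len_double:
  assumes "\<forall>a. 2 \<le> length ((subst_word \<tau> ^^ n) [a])"
  shows "2 * length xs \<le> length ((subst_word \<tau> ^^ n) xs)"
proof (induction xs)
  case (Cons a xs)
  have e: "length ((subst_word \<tau> ^^ n) (a # xs)) = length ((subst_word \<tau> ^^ n) [a]) + length ((subst_word \<tau> ^^ n) xs)"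
    by (simp add: sw_pow_Cons[where \<tau>=\<tau> and m=n and a=a and ys=xs])
  have "2 \<le> length ((subst_word \<tau> ^^ n) [a])" using assms by blast
  then show ?case using e Cons.IH by simp
qed simp

lemma len_exp:
  assumes "\<forall>a. 2 \<le> length ((subst_word \<tau> ^^ n) [a])"
  shows "2 ^ m * length xs \<le> length ((subst_word \<tau> ^^ (n * m)) xs)"
proof (induction m)
  case (Suc m)
  have "(subst_word \<tau> ^^ (n * Suc m)) xs = (subst_word \<tau> ^^ n) ((subst_word \<tau> ^^ (n * m)) xs)"
    by (simp add: funpow_add)
  moreover have "2 * length ((subst_word \<tau> ^^ (n * m)) xs) \<le> length ((subst_word \<tau> ^^ n) ((subst_word \<tau> ^^ (n * m)) xs))"
    using len_double[OF assms] by blast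
  ultimately show ?case using Suc by simp
qed simp

lemma uniform_rec:
  fixes u :: "nat \<Rightarrow> 'a::finite"
  assumes ne: "nonerasing \<tau>" and fp: "subst_seq \<tau> u = u"
    and allb: "\<forall>a b. b \<in> set ((subst_word \<tau> ^^ n) [a])"
    and two: "\<forall>a. 2 \<le> length ((subst_word \<tau> ^^ n) [a])"
  shows "\<exists>K. \<forall>m. \<exists>p. m \<le> p \<and> p \<le> m + K \<and> (\<forall>i<N. u (p + i) = u i)"
proof -
  define M where "M = n * N"
  define P0 where "P0 = (subst_word \<tau> ^^ M) [u 0]"
  define T where "T = subst_word \<tau> ^^ (M + n)"
  have "2 ^ N * length [u 0] \<le> length P0" unfolding P0_def M_def by (rule len_exp[OF two])
  then have B: "2 ^ N \<le> length P0" by simp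
  have C: "N < 2 ^ N" by (rule less_exp)
  have NP: "N \<le> length P0" using B C by linarith
  have fp1: "map u [0..<length ((subst_word \<tau> ^^ M) (map u [0..<1]))] = (subst_word \<tau> ^^ M) (map u [0..<1])"
    by (rule fix_prefix_pow[OF ne fp])
  have "map u [0..<1] = [u 0]" by simp
  then have "map u [0..<length P0] = P0"
    using fp1 unfolding P0_def by (simp only: \<open>map u [0..<1] = [u 0]\<close>)
  then have P0u: "P0 ! i = u i" if "i < N" for i
  proof -
    have "i < length P0" using that NP by simp
    moreover have "P0 ! i = map u [0..<length P0] ! i" using \<open>map u [0..<length P0] = P0\<close> by simp
    ultimately show ?thesis by simp
  qed
  have block: "\<exists>A B. T [b] = A @ P0 @ B" for b
  proof -
    have "u 0 \<in> set ((subst_word \<tau> ^^ n) [b])" using allb by blast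
    then obtain xs ys where "(subst_word \<tau> ^^ n) [b] = xs @ u 0 # ys"
      using split_list[of "u 0"] by blast
    then have "(subst_word \<tau> ^^ n) [b] = xs @ [u 0] @ ys" by simp
    then have "T [b] = (subst_word \<tau> ^^ M) xs @ P0 @ (subst_word \<tau> ^^ M) ys"
      unfolding T_def P0_def by (simp only: funpow_add comp_apply sw_pow_append)
    then show ?thesis by blast
  qed
  define K where "K = Max (range (\<lambda>b. length (T [b])))"
  have KT: "length (T [b]) \<le> K" for b unfolding K_def by (rule Max_ge) auto
  define g where "g k = length (T (map u [0..<k]))" for k
  have gk: "k \<le> g k" for k unfolding g_def T_def by (rule order_trans[OF _ sw_pow_len[OF ne]]) simp
  have Tsplit: "T (map u [0..<Suc k]) = T (map u [0..<k]) @ T [u k]" for k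
    unfolding T_def by (simp add: sw_pow_append)
  have gS: "g (Suc k) = g k + length (T [u k])" for k unfolding g_def using Tsplit by simp
  have Tfix: "map u [0..<g k] = T (map u [0..<k])" for k
    unfolding g_def T_def by (rule fix_prefix_pow[OF ne fp])
  show ?thesis
  proof (rule exI[of _ "K + K"], rule allI)
    fix m
    define k0 where "k0 = (LEAST k. m \<le> g k)"
    have k0: "m \<le> g k0" unfolding k0_def by (rule LeastI[of _ m]) (rule gk)
    have k0b: "g k0 \<le> m + K"
    proof (cases k0)
      case 0 then show ?thesis using k0 by (simp add: g_def T_def)
    next
      case (Suc k')
      then have "k' < k0" by simp
      then have "\<not> m \<le> g k'" unfolding k0_def by (rule not_less_Least)
      then show ?thesis using gS[of k'] KT[of "u k'"] Suc by simp
    qed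
    obtain A B where AB: "T [u k0] = A @ P0 @ B" using block by blast
    have lA: "length A \<le> K" using KT[of "u k0"] AB by simp
    define p where "p = g k0 + length A"
    have eq: "map u [0..<g (Suc k0)] = T (map u [0..<k0]) @ A @ P0 @ B"
      using Tfix[of "Suc k0"] Tsplit[of k0] AB by simp
    have "\<forall>i<N. u (p + i) = u i"
    proof (intro allI impI)
      fix i assume iN: "i < N"
      have lg: "length (T (map u [0..<k0])) = g k0" by (simp add: g_def)
      have pl: "p + i < g (Suc k0)"
        using gS[of k0] AB iN NP by (simp add: p_def)
      have "u (p + i) = map u [0..<g (Suc k0)] ! (p + i)" using pl by simp
      also have "\<dots> = P0 ! i" unfolding eq using iN NP lg
        by (simp add: p_def nth_append)
      finally show "u (p + i) = u i" using P0u[OF iN] by simp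
    qed
    then have "m \<le> p \<and> p \<le> m + (K + K) \<and> (\<forall>i<N. u (p + i) = u i)"
      using k0 k0b lA by (simp add: p_def)
    then show "\<exists>p. m \<le> p \<and> p \<le> m + (K + K) \<and> (\<forall>i<N. u (p + i) = u i)" by blast
  qed
qed




lemma shift_comp: "(shift ^^ a) ((shift ^^ b) x) = (shift ^^ (a + b)) x"
  by (simp add: funpow_add)

lemma X_closed: "closedin seq_topology (subshift u)"
  unfolding subshift_def by simp

lemma X_compact: "compactin seq_topology (subshift (u :: nat \<Rightarrow> 'a::finite))"
  by (rule closedin_compact_space[OF compact_seq X_closed])

lemma orbit_in_X: "(shift ^^ n) u \<in> subshift u"
  unfolding subshift_def by (rule subsetD[OF closure_of_subset]) auto

lemma shift_X: assumes "x \<in> subshift u" shows "(shift ^^ k) x \<in> subshift u"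
proof -
  have "(shift ^^ k) ` subshift u \<subseteq> seq_topology closure_of ((shift ^^ k) ` range (\<lambda>n. (shift ^^ n) u))"
    unfolding subshift_def by (rule continuous_map_image_closure_subset[OF cont_shift_pow])
  also have "\<dots> \<subseteq> subshift u"
    unfolding subshift_def
    by (rule closure_of_mono) (auto simp: shift_comp)
  finally show ?thesis using assms by blast
qed

lemma shift_X1: assumes "x \<in> subshift u" shows "shift x \<in> subshift u"
  using shift_X[OF assms, of 1] by simp

lemma X_approx: assumes "z \<in> subshift u" shows "\<exists>q. (shift ^^ q) u \<in> cyl z n"
proof -
  have "z \<in> cyl z n" by (simp add: cyl_def)
  then show ?thesis using assms cyl_open[of z n] unfolding subshift_def in_closure_of by blast
qed

lemma minimal:
  assumes UR: "\<forall>N. \<exists>K. \<forall>m. \<exists>p. m \<le> p \<and> p \<le> m + K \<and> (\<forall>i<N. u (p + i) = u i)"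
    and x: "x \<in> subshift u" and V: "openin (subtopology seq_topology (subshift u)) V" and z: "z \<in> V"
  shows "\<exists>k. (shift ^^ k) x \<in> V"
proof -
  obtain W where W: "openin seq_topology W" "V = W \<inter> subshift u"
    using V unfolding openin_subtopology by blast
  obtain n where n: "cyl z n \<subseteq> W" using open_cyl[OF W(1)] z W(2) by blast
  have zX: "z \<in> subshift u" using z W(2) by blast
  obtain q where q: "(shift ^^ q) u \<in> cyl z n" using X_approx[OF zX] by blast
  obtain K where K: "\<forall>m. \<exists>p. m \<le> p \<and> p \<le> m + K \<and> (\<forall>i<q + n. u (p + i) = u i)"
    using UR by blast
  obtain m where m: "(shift ^^ m) u \<in> cyl x (K + (q + n))" using X_approx[OF x] by blast
  obtain p where p: "m \<le> p" "p \<le> m + K" "\<forall>i<q + n. u (p + i) = u i" using K by blast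
  define k where "k = p - m + q"
  have "(shift ^^ k) x \<in> cyl z n"
    unfolding cyl_def
  proof (intro CollectI allI impI)
    fix i assume i: "i < n"
    have "k + i < K + (q + n)" using i p unfolding k_def by simp
    then have "x (k + i) = u (m + (k + i))" using m by (simp add: cyl_def shift_pow_apply)
    also have "m + (k + i) = p + (q + i)" using p unfolding k_def by simp
    also have "u (p + (q + i)) = u (q + i)" using p(3) i by simp
    also have "u (q + i) = z i" using q i by (simp add: cyl_def shift_pow_apply)
    finally show "(shift ^^ k) x i = z i" by (simp add: shift_pow_apply)
  qed
  then have "(shift ^^ k) x \<in> W" using n by blast
  moreover have "(shift ^^ k) x \<in> subshift u" using shift_X[OF x] .
  ultimately show ?thesis using W(2) by blast
qed

lemma cover_bound:
  assumes K: "compactin seq_topology K" and W: "openin seq_topology W"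
    and all: "\<forall>x\<in>K. \<exists>i. P i \<and> (shift ^^ i) x \<in> W"
  shows "\<exists>B. \<forall>x\<in>K. \<exists>i\<le>B. P i \<and> (shift ^^ i) x \<in> W"
proof -
  define f where "f i = {x. (shift ^^ i) x \<in> W}" for i
  have op: "\<forall>C\<in>f ` {i. P i}. openin seq_topology C"
  proof
    fix C assume "C \<in> f ` {i. P i}"
    then obtain i where "C = f i" by blast
    then show "openin seq_topology C"
      using openin_continuous_map_preimage[OF cont_shift_pow W, of i] unfolding f_def by simp
  qed
  have cov: "K \<subseteq> \<Union> (f ` {i. P i})" using all unfolding f_def by blast
  obtain F where F: "finite F" "F \<subseteq> f ` {i. P i}" "K \<subseteq> \<Union>F"
    using K op cov unfolding compactin_def by meson
  obtain C where C: "C \<subseteq> {i. P i}" "finite C" "F = f ` C"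
    using finite_subset_image[OF F(1) F(2)] by blast
  show ?thesis
  proof (rule exI[of _ "Max C"], rule ballI)
    fix x assume "x \<in> K"
    then obtain i where i: "i \<in> C" "x \<in> f i" using F(3) C(3) by blast
    have "i \<le> Max C" using C(2) i(1) by simp
    then show "\<exists>i\<le>Max C. P i \<and> (shift ^^ i) x \<in> W" using i C(1) unfolding f_def by blast
  qed
qed

lemma unique_pre:
  assumes bU: "\<forall>y. branch_point X y \<longrightarrow> y \<in> U"
    and a: "a \<in> X" and b: "b \<in> X" and eq: "shift a = shift b" and yX: "shift a \<in> X" and yU: "shift a \<notin> U"
  shows "a = b"
  using assms unfolding branch_point_def by metis

lemma height_le: "1 \<le> i \<Longrightarrow> (shift ^^ i) x \<in> U \<Longrightarrow> height U x \<le> i"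
  unfolding height_def by (rule Least_le) simp

lemma height_props:
  assumes "\<exists>k. 1 \<le> k \<and> (shift ^^ k) x \<in> U"
  shows "1 \<le> height U x" "(shift ^^ height U x) x \<in> U"
  using LeastI_ex[OF assms] unfolding height_def by auto

lemma below_height: "1 \<le> i \<Longrightarrow> i < height U x \<Longrightarrow> (shift ^^ i) x \<notin> U"
  using height_le by fastforce

lemma walk_back:
  assumes bU: "\<forall>y. branch_point (subshift u) y \<longrightarrow> y \<in> U" and US: "U \<subseteq> subshift u"
    and x: "x \<in> U" and x': "x' \<in> U" and eq: "(shift ^^ j) x = (shift ^^ j') x'"
    and hj: "j < height U x" and hj': "j' < height U x'" and le: "j \<le> j'"
  shows "j = j' \<and> x = x'"
proof -
  have xX: "x \<in> subshift u" and x'X: "x' \<in> subshift u" using x x' US by auto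
  have walk: "i \<le> j \<Longrightarrow> (shift ^^ (j - i)) x = (shift ^^ (j' - i)) x'" for i
  proof (induction i)
    case 0 then show ?case using eq by simp
  next
    case (Suc i)
    define a where "a = (shift ^^ (j - Suc i)) x"
    define a' where "a' = (shift ^^ (j' - Suc i)) x'"
    have ja: "j - i = Suc (j - Suc i)" using Suc.prems by simp
    have ja': "j' - i = Suc (j' - Suc i)" using Suc.prems le by simp
    have sa: "shift a = (shift ^^ (j - i)) x" unfolding a_def ja by simp
    have sa': "shift a' = (shift ^^ (j' - i)) x'" unfolding a'_def ja' by simp
    have e: "shift a = shift a'" using sa sa' Suc by simp
    have nU: "shift a \<notin> U" unfolding sa
      by (rule below_height) (use Suc.prems hj in simp_all)
    have "a = a'"
      by (rule unique_pre[OF bU _ _ e _ nU]) (simp_all add: a_def a'_def shift_X xX x'X shift_X1)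
    then show ?case unfolding a_def a'_def .
  qed
  have xe: "x = (shift ^^ (j' - j)) x'" using walk[of j] by simp
  show ?thesis
  proof (cases "j = j'")
    case True then show ?thesis using xe by simp
  next
    case False
    then have "(shift ^^ (j' - j)) x' \<notin> U" using le hj' by (intro below_height) simp_all
    then show ?thesis using xe x by simp
  qed
qed

lemma pre_closed:
  assumes "closedin seq_topology C"
  shows "closedin seq_topology {x \<in> subshift u. (shift ^^ i) x \<in> C}"
proof -
  have "{x \<in> subshift u. (shift ^^ i) x \<in> C} = subshift u \<inter> {x \<in> topspace seq_topology. (shift ^^ i) x \<in> C}"
    by auto
  then show ?thesis
    using closedin_Int[OF X_closed closedin_continuous_map_preimage[OF cont_shift_pow assms]] by simp
qed




theorem lemma14:
  fixes \<tau> :: "'a::finite \<Rightarrow> 'a list" and u :: "nat \<Rightarrow> 'a" and U :: "(nat \<Rightarrow> 'a) set"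
  assumes nonerasing: "nonerasing \<tau>"
    and fixpoint: "subst_seq \<tau> u = u"
    and prim: "primitive \<tau>"
    and inf: "infinite (subshift u)"
    and recog: "unilaterally_recognizable \<tau> (subshift u)"
    and inj_pow: "\<forall>n. inj (subst_pow \<tau> n)"
    and qi: "quasi_invertible (subshift u)"
    and U_sub: "U \<subseteq> subshift u"
    and U_clopen: "clopen_in (subshift u) U"
    and U_branch: "\<forall>y. branch_point (subshift u) y \<longrightarrow> y \<in> U"
  defines "H \<equiv> Max (height U ` U)"
  shows "(\<forall>k j. 1 \<le> k \<and> k \<le> H \<and> j < k \<longrightarrow> clopen_in (subshift u) (tower_level U k j))
       \<and> (\<Union>k\<in>{1..H}. \<Union>j<k. tower_level U k j) = subshift u
       \<and> (\<forall>k j k' j'. 1 \<le> k \<and> k \<le> H \<and> j < k \<and> 1 \<le> k' \<and> k' \<le> H \<and> j' < k'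
            \<and> (k, j) \<noteq> (k', j') \<longrightarrow> tower_level U k j \<inter> tower_level U k' j' = {})"
proof -
  let ?X = "subshift u"
  obtain bpt where bp: "branch_point ?X bpt" using qi unfolding quasi_invertible_def by blast
  have bU: "bpt \<in> U" using bp U_branch by blast
  have bX: "bpt \<in> ?X" using bp unfolding branch_point_def by blast
  obtain c1 c2 :: 'a where c12: "c1 \<noteq> c2"
  proof (rule ccontr)
    assume "\<not> thesis"
    then have all: "\<forall>c1 c2 :: 'a. c1 = c2" using that by blast
    have "?X \<subseteq> {u}"
    proof
      fix x assume "x \<in> ?X"
      have "x = u" using all by (intro ext) blast
      then show "x \<in> {u}" by simp
    qed
    then have "finite ?X" using finite_subset by blast
    then show False using inf by blast
  qed
  obtain n where allb0: "\<forall>a b. b \<in> set (subst_pow \<tau> n a)"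
    using prim unfolding primitive_def by blast
  have allb: "\<forall>a b. b \<in> set ((subst_word \<tau> ^^ n) [a])" using allb0 unfolding subst_pow_def .
  have two: "\<forall>a. 2 \<le> length ((subst_word \<tau> ^^ n) [a])"
  proof
    fix a
    let ?l = "(subst_word \<tau> ^^ n) [a]"
    have "{c1, c2} \<subseteq> set ?l" using allb by blast
    then have "card {c1, c2} \<le> card (set ?l)" by (intro card_mono) simp_all
    also have "\<dots> \<le> length ?l" by (rule card_length)
    finally show "2 \<le> length ?l" using c12 by simp
  qed
  have UR: "\<forall>N. \<exists>K. \<forall>m. \<exists>p. m \<le> p \<and> p \<le> m + K \<and> (\<forall>i<N. u (p + i) = u i)"
    using uniform_rec[OF nonerasing fixpoint allb two] by blast
  have Uopen: "openin (subtopology seq_topology ?X) U" using U_clopen unfolding clopen_in_def by blast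
  have Uclosed: "closedin seq_topology U"
    using U_clopen X_closed closedin_trans_full unfolding clopen_in_def by blast
  have Ucomp: "compactin seq_topology U" by (rule closedin_compact_space[OF compact_seq Uclosed])
  obtain W where W: "openin seq_topology W" "U = W \<inter> ?X"
    using Uopen unfolding openin_subtopology by blast
  have hret: "\<exists>k. 1 \<le> k \<and> (shift ^^ k) x \<in> U" if x: "x \<in> U" for x
  proof -
    have "shift x \<in> ?X" using x U_sub shift_X1 by blast
    then obtain k where "(shift ^^ k) (shift x) \<in> U" using minimal[OF UR _ Uopen bU] by blast
    then have "(shift ^^ Suc k) x \<in> U" by (simp only: funpow_Suc_right comp_apply)
    then show ?thesis by (intro exI[of _ "Suc k"]) simp
  qed
  have h1: "1 \<le> height U x" if "x \<in> U" for x using height_props(1)[OF hret[OF that]] .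
  have "\<forall>x\<in>U. \<exists>i. 1 \<le> i \<and> (shift ^^ i) x \<in> W" using hret W(2) by blast
  then obtain B where B: "\<forall>x\<in>U. \<exists>i\<le>B. 1 \<le> i \<and> (shift ^^ i) x \<in> W"
    using cover_bound[OF Ucomp W(1)] by blast
  have hB: "height U x \<le> B" if x: "x \<in> U" for x
  proof -
    obtain i where i: "i \<le> B" "1 \<le> i" "(shift ^^ i) x \<in> W" using B x by blast
    have "(shift ^^ i) x \<in> ?X" using x U_sub shift_X by blast
    then have "(shift ^^ i) x \<in> U" using i(3) W(2) by blast
    then show ?thesis using height_le[OF i(2)] i(1) by fastforce
  qed
  have "height U ` U \<subseteq> {..B}" using hB by blast
  then have finH: "finite (height U ` U)" using finite_subset by blast
  have hH: "height U x \<le> H" if "x \<in> U" for x unfolding H_def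
    by (rule Max_ge[OF finH]) (rule imageI[OF that])
  have Yclosed: "closedin seq_topology (shift ` ?X)"
  proof -
    have "compactin seq_topology ((shift ^^ 1) ` ?X)" by (rule image_compactin[OF X_compact cont_shift_pow])
    then show ?thesis using compactin_imp_closedin[OF hausdorff_seq] by simp
  qed
  have uY: "u \<in> shift ` ?X"
  proof -
    have "u \<in> seq_topology closure_of (range (\<lambda>k. (shift ^^ Suc k) u))"
      unfolding in_closure_of
    proof (intro conjI allI impI)
      fix T assume T: "u \<in> T \<and> openin seq_topology T"
      obtain m where m: "cyl u m \<subseteq> T" using open_cyl T by blast
      have o: "openin (subtopology seq_topology ?X) (cyl u m \<inter> ?X)"
        unfolding openin_subtopology using cyl_open by blast
      have "u \<in> cyl u m \<inter> ?X" using orbit_in_X[of 0 u] by (simp add: cyl_def)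
      then obtain k where "(shift ^^ k) (shift u) \<in> cyl u m \<inter> ?X"
        using minimal[OF UR shift_X1[OF orbit_in_X[of 0 u, simplified]] o] by blast
      then have "(shift ^^ Suc k) u \<in> T" using m by (simp only: funpow_Suc_right comp_apply) blast
      then show "\<exists>y. y \<in> range (\<lambda>k. (shift ^^ Suc k) u) \<and> y \<in> T" by blast
    qed simp
    moreover have "range (\<lambda>k. (shift ^^ Suc k) u) \<subseteq> shift ` ?X"
      using orbit_in_X by (auto intro!: image_eqI)
    ultimately show ?thesis using closure_of_minimal[OF _ Yclosed] by blast
  qed
  have surj1: "?X \<subseteq> shift ` ?X"
  proof -
    have "range (\<lambda>n. (shift ^^ n) u) \<subseteq> shift ` ?X"
    proof
      fix y assume "y \<in> range (\<lambda>n. (shift ^^ n) u)"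
      then obtain k where k: "y = (shift ^^ k) u" by blast
      show "y \<in> shift ` ?X"
      proof (cases k)
        case 0 then show ?thesis using uY k by simp
      next
        case (Suc k') then show ?thesis using k orbit_in_X[of k' u] by auto
      qed
    qed
    then show ?thesis unfolding subshift_def using closure_of_minimal[OF _ Yclosed[unfolded subshift_def]] by blast
  qed
  have surjN: "\<exists>w\<in>?X. (shift ^^ N) w = y" if "y \<in> ?X" for N y
    using that
  proof (induction N arbitrary: y)
    case 0 then show ?case by auto
  next
    case (Suc N)
    obtain w where w: "w \<in> ?X" "(shift ^^ N) w = y" using Suc by blast
    obtain v where v: "v \<in> ?X" "shift v = w" using surj1 w(1) by blast
    have "(shift ^^ Suc N) v = y" using v w by (simp only: funpow_Suc_right comp_apply)
    then show ?case using v by blast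
  qed
  have allW: "\<forall>w\<in>?X. \<exists>i. (\<lambda>_. True) i \<and> (shift ^^ i) w \<in> W"
  proof
    fix w assume "w \<in> ?X"
    then obtain i where "(shift ^^ i) w \<in> U" using minimal[OF UR _ Uopen bU] by blast
    then show "\<exists>i. (\<lambda>_. True) i \<and> (shift ^^ i) w \<in> W" using W(2) by blast
  qed
  obtain B2 where B2: "\<forall>w\<in>?X. \<exists>i\<le>B2. (\<lambda>_. True) i \<and> (shift ^^ i) w \<in> W"
    using cover_bound[OF X_compact W(1) allW] by (elim exE) (rule that)
  have reach: "\<exists>j. \<exists>x\<in>U. (shift ^^ j) x = y" if y: "y \<in> ?X" for y
  proof -
    obtain w where w: "w \<in> ?X" "(shift ^^ B2) w = y" using surjN y by blast
    obtain i where i: "i \<le> B2" "(shift ^^ i) w \<in> W" using B2 w(1) by blast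
    have "(shift ^^ i) w \<in> U" using i(2) W(2) shift_X w(1) by blast
    moreover have "(shift ^^ (B2 - i)) ((shift ^^ i) w) = y" using i(1) w(2) by (simp add: shift_comp)
    ultimately show ?thesis by blast
  qed
  have covers: "\<exists>k j. 1 \<le> k \<and> k \<le> H \<and> j < k \<and> y \<in> tower_level U k j" if y: "y \<in> ?X" for y
  proof -
    define j0 where "j0 = (LEAST j. \<exists>x\<in>U. (shift ^^ j) x = y)"
    have "\<exists>x\<in>U. (shift ^^ j0) x = y" unfolding j0_def using reach[OF y] by (rule LeastI_ex)
    then obtain x where x: "x \<in> U" "(shift ^^ j0) x = y" by blast
    have lt: "j0 < height U x"
    proof (rule ccontr)
      assume "\<not> j0 < height U x"
      then have le: "height U x \<le> j0" by simp
      have "(shift ^^ height U x) x \<in> U" using height_props(2)[OF hret[OF x(1)]] .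
      moreover have "(shift ^^ (j0 - height U x)) ((shift ^^ height U x) x) = y"
        using le x(2) by (simp add: shift_comp)
      ultimately have "\<exists>z\<in>U. (shift ^^ (j0 - height U x)) z = y" by blast
      moreover have "j0 - height U x < j0" using h1[OF x(1)] le by simp
      ultimately show False unfolding j0_def using not_less_Least by blast
    qed
    have "y \<in> tower_level U (height U x) j0" unfolding tower_level_def using x by blast
    then show ?thesis using h1[OF x(1)] hH[OF x(1)] lt by blast
  qed
  have levels_sub: "tower_level U k j \<subseteq> ?X" for k j
    unfolding tower_level_def using U_sub shift_X by blast
  have union: "(\<Union>k\<in>{1..H}. \<Union>j<k. tower_level U k j) = ?X"
  proof
    show "(\<Union>k\<in>{1..H}. \<Union>j<k. tower_level U k j) \<subseteq> ?X" using levels_sub by blast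
    show "?X \<subseteq> (\<Union>k\<in>{1..H}. \<Union>j<k. tower_level U k j)"
    proof
      fix y assume "y \<in> ?X"
      then obtain k j where "1 \<le> k" "k \<le> H" "j < k" "y \<in> tower_level U k j" using covers by blast
      then show "y \<in> (\<Union>k\<in>{1..H}. \<Union>j<k. tower_level U k j)" by auto
    qed
  qed
  have disj: "tower_level U k j \<inter> tower_level U k' j' = {}"
    if "j < k" "j' < k'" "(k, j) \<noteq> (k', j')" for k j k' j'
  proof (rule ccontr)
    assume "tower_level U k j \<inter> tower_level U k' j' \<noteq> {}"
    then obtain x x' where x: "x \<in> U" "height U x = k" and x': "x' \<in> U" "height U x' = k'"
      and eq: "(shift ^^ j) x = (shift ^^ j') x'"
      unfolding tower_level_def by auto
    have "j = j' \<and> x = x'"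
    proof (cases "j \<le> j'")
      case True
      show ?thesis by (rule walk_back[OF U_branch U_sub x(1) x'(1) eq _ _ True]) (use x x' that in simp_all)
    next
      case False
      have "j' = j \<and> x' = x"
        by (rule walk_back[OF U_branch U_sub x'(1) x(1) eq[symmetric]]) (use x x' that False in simp_all)
      then show ?thesis by simp
    qed
    then show False using x x' that(3) by simp
  qed
  have closed_level: "closedin seq_topology (tower_level U k j)" if k: "1 \<le> k" for k j
  proof -
    define A where "A = {x \<in> U. height U x = k}"
    have XU: "closedin seq_topology (?X - U)"
    proof -
      have "closedin (subtopology seq_topology ?X) (topspace (subtopology seq_topology ?X) - U)"
        using Uopen unfolding openin_closedin_eq by blast
      then have "closedin (subtopology seq_topology ?X) (?X - U)" by simp
      then show ?thesis using closedin_trans_full X_closed by blast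
    qed
    define C where "C i = {x \<in> ?X. (shift ^^ i) x \<in> ?X - U}" for i
    have Ceq: "A = U \<inter> {x \<in> ?X. (shift ^^ k) x \<in> U} \<inter> \<Inter> (insert ?X (C ` {1..<k}))"
    proof
      show "A \<subseteq> U \<inter> {x \<in> ?X. (shift ^^ k) x \<in> U} \<inter> \<Inter> (insert ?X (C ` {1..<k}))"
      proof
        fix x assume "x \<in> A"
        then have x: "x \<in> U" "height U x = k" unfolding A_def by auto
        have xX: "x \<in> ?X" using x U_sub by blast
        have "(shift ^^ k) x \<in> U" using height_props(2)[OF hret[OF x(1)]] x(2) by simp
        moreover have "x \<in> C i" if "i \<in> {1..<k}" for i
          using below_height[where i=i and U=U and x=x] that x(2) xX shift_X[OF xX, of i] unfolding C_def by auto
        ultimately show "x \<in> U \<inter> {x \<in> ?X. (shift ^^ k) x \<in> U} \<inter> \<Inter> (insert ?X (C ` {1..<k}))"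
          using x xX by blast
      qed
      show "U \<inter> {x \<in> ?X. (shift ^^ k) x \<in> U} \<inter> \<Inter> (insert ?X (C ` {1..<k})) \<subseteq> A"
      proof
        fix x assume x: "x \<in> U \<inter> {x \<in> ?X. (shift ^^ k) x \<in> U} \<inter> \<Inter> (insert ?X (C ` {1..<k}))"
        have le: "height U x \<le> k" using x k height_le[where i=k and U=U and x=x] by blast
        have "\<not> height U x < k"
        proof
          assume lt: "height U x < k"
          have "x \<in> C (height U x)" using x lt h1[of x] by auto
          then have "(shift ^^ height U x) x \<notin> U" unfolding C_def by blast
          then show False using height_props(2)[OF hret] x by blast
        qed
        then show "x \<in> A" using le x unfolding A_def by auto
      qed
    qed
    have cA: "closedin seq_topology A"
      unfolding Ceq
    proof (intro closedin_Int closedin_Inter)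
      show "closedin seq_topology U" by (rule Uclosed)
      show "closedin seq_topology {x \<in> ?X. (shift ^^ k) x \<in> U}" by (rule pre_closed[OF Uclosed])
      show "insert ?X (C ` {1..<k}) \<noteq> {}" by simp
      fix S assume "S \<in> insert ?X (C ` {1..<k})"
      then show "closedin seq_topology S" using X_closed pre_closed[OF XU] unfolding C_def by blast
    qed
    have "compactin seq_topology ((shift ^^ j) ` A)"
      by (rule image_compactin[OF closedin_compact_space[OF compact_seq cA] cont_shift_pow])
    then show ?thesis unfolding tower_level_def A_def[symmetric]
      by (rule compactin_imp_closedin[OF hausdorff_seq])
  qed
  define I where "I = {(k, j). 1 \<le> k \<and> k \<le> H \<and> j < k}"
  have finI: "finite I" unfolding I_def by (rule finite_subset[of _ "{..H} \<times> {..H}"]) auto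
  have clopen: "clopen_in ?X (tower_level U k j)" if kj: "1 \<le> k" "k \<le> H" "j < k" for k j
  proof -
    let ?O = "\<Union>p\<in>I - {(k, j)}. tower_level U (fst p) (snd p)"
    have cl: "closedin (subtopology seq_topology ?X) (tower_level U k j)"
      using closed_level[OF kj(1)] levels_sub closedin_closed_subtopology[OF X_closed] by blast
    have clO: "closedin seq_topology ?O"
      by (rule closedin_Union) (use finI closed_level in \<open>auto simp: I_def\<close>)
    have eqO: "tower_level U k j = ?X - ?O"
    proof
      show "tower_level U k j \<subseteq> ?X - ?O"
        using levels_sub disj kj unfolding I_def by fastforce
      show "?X - ?O \<subseteq> tower_level U k j"
      proof
        fix y assume y: "y \<in> ?X - ?O"
        then obtain k' j' where k': "1 \<le> k'" "k' \<le> H" "j' < k'" "y \<in> tower_level U k' j'"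
          using covers by blast
        show "y \<in> tower_level U k j"
        proof (cases "(k', j') = (k, j)")
          case True then show ?thesis using k' by simp
        next
          case False
          then have "(k', j') \<in> I - {(k, j)}" using k' unfolding I_def by auto
          then have "y \<notin> tower_level U (fst (k', j')) (snd (k', j'))" using y by blast
          then show ?thesis using k'(4) by simp
        qed
      qed
    qed
    have op: "openin (subtopology seq_topology ?X) (tower_level U k j)"
    proof -
      have "closedin (subtopology seq_topology ?X) (?X \<inter> ?O)"
        unfolding closedin_subtopology using clO by blast
      then have "openin (subtopology seq_topology ?X) (topspace (subtopology seq_topology ?X) - (?X \<inter> ?O))"
        by (rule openin_diff[OF openin_topspace])
      then show ?thesis using eqO by (simp add: Diff_Int)
    qed
    show ?thesis unfolding clopen_in_def using op cl by blast
  qed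
  show ?thesis
  proof (intro conjI allI impI)
    fix k j assume h: "1 \<le> k \<and> k \<le> H \<and> j < k"
    show "clopen_in ?X (tower_level U k j)" by (rule clopen) (use h in simp_all)
  next
    show "(\<Union>k\<in>{1..H}. \<Union>j<k. tower_level U k j) = ?X" by (rule union)
  next
    fix k j k' j' assume h: "1 \<le> k \<and> k \<le> H \<and> j < k \<and> 1 \<le> k' \<and> k' \<le> H \<and> j' < k' \<and> (k, j) \<noteq> (k', j')"
    show "tower_level U k j \<inter> tower_level U k' j' = {}" by (rule disj) (use h in simp_all)
  qed
qed


end
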